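(* Let $H$ be a separable complex Hilbert space, let $\mathcal{U}$ be a unitary system on $H$, let $\psi,\eta\in\mathcal{W}(\mathcal{U})$, and let $V$ be the unique unitary operator in the local commutant $\mathcal{C}_\psi(\mathcal{U})$ with $V\psi=\eta$. Suppose that for some $0<\alpha<\frac{\pi}{2}$ the vector $\rho:=\cos\alpha\cdot\psi+i\sin\alpha\cdot\eta$ belongs to $\mathcal{W}(\mathcal{U})$. Then $V^2=I$.
   Context: A unitary system on $H$ is a collection $\mathcal{U}$ of unitary operators on $H$ containing the identity operator. A vector $\psi\in H$ is a complete wandering vector for $\mathcal{U}$ if $\{U\psi:U\in\mathcal{U}\}$ is an orthonormal set (distinct elements of $\mathcal{U}$ giving orthogonal vectors) whose closed linear span is $H$; $\mathcal{W}(\mathcal{U})$ denotes the set of such vectors. The local commutant of $\mathcal{U}$ at $\psi$ is $\mathcal{C}_\psi(\mathcal{U}):=\{A\in B(H): (AU-UA)\psi=0 \text{ for all } U\in\mathcal{U}\}$. For $\psi,\eta\in\mathcal{W}(\mathcal{U})$ there is exactly one unitary $V\in\mathcal{C}_\psi(\mathcal{U})$ with $V\psi=\eta$, namely the unitary with $V(U\psi)=U\eta$ for all $U\in\mathcal{U}$. *)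

theory Defs
  imports "HOL-Analysis.Analysis"
begin

text \<open>Complex Hilbert spaces: a Banach space (over the reals, via the library class
  complete_space) carrying a complex scalar multiplication compatible with the real one,
  and a complex inner product (linear in the second, conjugate-linear in the first
  argument) inducing the norm.\<close>

class complex_hilbert = real_normed_vector + complete_space +
  fixes scaleC :: "complex \<Rightarrow> 'a \<Rightarrow> 'a" (infixr \<open>*\<^sub>C\<close> 75)
    and cinner :: "'a \<Rightarrow> 'a \<Rightarrow> complex"
  assumes scaleC_add_right: "a *\<^sub>C (x + y) = a *\<^sub>C x + a *\<^sub>C y"
    and scaleC_add_left: "(a + b) *\<^sub>C x = a *\<^sub>C x + b *\<^sub>C x"
    and scaleC_scaleC: "a *\<^sub>C (b *\<^sub>C x) = (a * b) *\<^sub>C x"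
    and scaleC_one: "1 *\<^sub>C x = x"
    and scaleR_scaleC: "scaleR r x = complex_of_real r *\<^sub>C x"
    and cinner_commute: "cinner x y = cnj (cinner y x)"
    and cinner_add_left: "cinner (x + y) z = cinner x z + cinner y z"
    and cinner_scaleC_left: "cinner (a *\<^sub>C x) y = cnj a * cinner x y"
    and cinner_nonneg: "0 \<le> Re (cinner x x)"
    and cinner_eq_zero_iff: "cinner x x = 0 \<longleftrightarrow> x = 0"
    and norm_eq_sqrt_cinner: "norm x = sqrt (Re (cinner x x))"

definition separable_space :: "'a::topological_space itself \<Rightarrow> bool" where
  "separable_space _ \<longleftrightarrow> (\<exists>D::'a set. countable D \<and> closure D = UNIV)"

definition cspan :: "'a::complex_hilbert set \<Rightarrow> 'a set" where
  "cspan S = {x. \<exists>F c. finite F \<and> F \<subseteq> S \<and> x = (\<Sum>v\<in>F. c v *\<^sub>C v)}"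

definition clinear :: "('a::complex_hilbert \<Rightarrow> 'a) \<Rightarrow> bool" where
  "clinear A \<longleftrightarrow> (\<forall>x y. A (x + y) = A x + A y) \<and> (\<forall>a x. A (a *\<^sub>C x) = a *\<^sub>C A x)"

definition bounded_op :: "('a::complex_hilbert \<Rightarrow> 'a) \<Rightarrow> bool" where
  "bounded_op A \<longleftrightarrow> clinear A \<and> (\<exists>K. \<forall>x. norm (A x) \<le> K * norm x)"

definition unitary :: "('a::complex_hilbert \<Rightarrow> 'a) \<Rightarrow> bool" where
  "unitary U \<longleftrightarrow> bounded_op U \<and> surj U \<and> (\<forall>x y. cinner (U x) (U y) = cinner x y)"

definition unitary_system :: "('a::complex_hilbert \<Rightarrow> 'a) set \<Rightarrow> bool" where
  "unitary_system \<U> \<longleftrightarrow> (\<forall>U\<in>\<U>. unitary U) \<and> id \<in> \<U>"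

definition wandering :: "('a::complex_hilbert \<Rightarrow> 'a) set \<Rightarrow> 'a set" where
  "wandering \<U> = {\<psi>. (\<forall>U\<in>\<U>. \<forall>W\<in>\<U>. cinner (U \<psi>) (W \<psi>) = (if U = W then 1 else 0))
                     \<and> closure (cspan ((\<lambda>U. U \<psi>) ` \<U>)) = UNIV}"

definition local_commutant :: "('a::complex_hilbert \<Rightarrow> 'a) set \<Rightarrow> 'a \<Rightarrow> ('a \<Rightarrow> 'a) set" where
  "local_commutant \<U> \<psi> = {A. bounded_op A \<and> (\<forall>U\<in>\<U>. A (U \<psi>) - U (A \<psi>) = 0)}"

end

theory Submission
  imports Defs
begin

lemma scaleC_zero_left_h: "(0::complex) *\<^sub>C (x::'a::complex_hilbert) = 0"
proof -
  have "(0::complex) *\<^sub>C x = 0 *\<^sub>C x + 0 *\<^sub>C x" using scaleC_add_left[of 0 0 x] by simp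
  thus ?thesis by simp
qed

lemma scaleC_zero_right_h: "a *\<^sub>C (0::'a::complex_hilbert) = 0"
proof -
  have "a *\<^sub>C (0::'a) = a *\<^sub>C 0 + a *\<^sub>C 0" using scaleC_add_right[of a 0 0] by simp
  thus ?thesis by simp
qed

lemma cinner_add_right_h: "cinner (x::'a::complex_hilbert) (y + z) = cinner x y + cinner x z"
  by (metis cinner_commute cinner_add_left complex_cnj_add)

lemma cinner_scaleC_right_h: "cinner (x::'a::complex_hilbert) (a *\<^sub>C y) = a * cinner x y"
  by (metis cinner_commute cinner_scaleC_left complex_cnj_mult complex_cnj_cnj)

lemma cinner_zero_left_h: "cinner (0::'a::complex_hilbert) y = 0"
  using cinner_add_left[of "0::'a" 0 y] by simp

lemma cinner_diff_left_h: "cinner ((x::'a::complex_hilbert) - y) z = cinner x z - cinner y z"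
  using cinner_add_left[of "x - y" y z] by simp

lemma clinear_zero_h: "clinear A \<Longrightarrow> A (0::'a::complex_hilbert) = 0"
  unfolding clinear_def by (metis add_cancel_right_right add_0)

lemma clinear_diff_h: "clinear A \<Longrightarrow> A ((x::'a::complex_hilbert) - y) = A x - A y"
  unfolding clinear_def by (metis diff_add_cancel eq_diff_eq)

lemma norm_sq_h: "(norm (x::'a::complex_hilbert))^2 = Re (cinner x x)"
  using norm_eq_sqrt_cinner[of x] cinner_nonneg[of x] by simp

lemma re_cinner_h: "Re (cinner (x::'a::complex_hilbert) z) =
   ((norm (x+z))^2 - (norm x)^2 - (norm z)^2) / 2"
proof -
  have "cinner (x+z) (x+z) = cinner x x + cinner x z + cinner z x + cinner z z"
    by (simp add: cinner_add_left cinner_add_right_h)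
  moreover have "cinner z x = cnj (cinner x z)" by (rule cinner_commute)
  ultimately have "Re (cinner (x+z) (x+z)) = Re (cinner x x) + 2 * Re (cinner x z) + Re (cinner z z)"
    by simp
  thus ?thesis by (simp add: norm_sq_h)
qed

lemma im_cinner_h: "Im (cinner (x::'a::complex_hilbert) z) = - Re (cinner x (\<i> *\<^sub>C z))"
  by (simp add: cinner_scaleC_right_h)

lemma cont_cinner_h: "continuous_on UNIV (\<lambda>x::'a::complex_hilbert. cinner x z)"
proof -
  have eq: "(\<lambda>x. cinner x z) = (\<lambda>x. Complex
     (((norm (x+z))^2 - (norm x)^2 - (norm z)^2) / 2)
     (- (((norm (x+\<i> *\<^sub>C z))^2 - (norm x)^2 - (norm (\<i> *\<^sub>C z))^2) / 2)))"
    by (rule ext, metis re_cinner_h im_cinner_h complex_surj)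
  show ?thesis unfolding eq by (intro continuous_intros) auto
qed

lemma span_all_h:
  fixes B S :: "'a::complex_hilbert set"
  assumes "closure (cspan B) = UNIV" "closed S" "B \<subseteq> S" "0 \<in> S"
    "\<And>x y. x \<in> S \<Longrightarrow> y \<in> S \<Longrightarrow> x + y \<in> S"
    "\<And>a x. x \<in> S \<Longrightarrow> a *\<^sub>C x \<in> S"
  shows "S = UNIV"
proof -
  have sum: "finite F \<Longrightarrow> F \<subseteq> B \<Longrightarrow> (\<Sum>v\<in>F. c v *\<^sub>C v) \<in> S" for F c
  proof (induction F rule: finite_induct)
    case empty then show ?case using assms(4) by simp
  next
    case (insert v F)
    then show ?case using assms(3,5,6) by auto
  qed
  have "cspan B \<subseteq> S" unfolding cspan_def using sum by blast
  then have "closure (cspan B) \<subseteq> S" using closure_minimal assms(2) by blast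
  then show ?thesis using assms(1) by blast
qed

theorem proposition5:
  fixes \<U> :: "('a::complex_hilbert \<Rightarrow> 'a) set"
    and \<psi> \<eta> :: 'a and V :: "'a \<Rightarrow> 'a" and \<alpha> :: real
  assumes "separable_space TYPE('a)"
    and "unitary_system \<U>"
    and "\<psi> \<in> wandering \<U>" and "\<eta> \<in> wandering \<U>"
    and "unitary V" and "V \<in> local_commutant \<U> \<psi>" and "V \<psi> = \<eta>"
    and "0 < \<alpha>" and "\<alpha> < pi / 2"
    and "complex_of_real (cos \<alpha>) *\<^sub>C \<psi> + (\<i> * complex_of_real (sin \<alpha>)) *\<^sub>C \<eta> \<in> wandering \<U>"
  shows "V \<circ> V = id"
proof -
  define c where "c = complex_of_real (cos \<alpha>)"
  define s where "s = \<i> * complex_of_real (sin \<alpha>)"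
  define \<rho> where "\<rho> = c *\<^sub>C \<psi> + s *\<^sub>C \<eta>"
  have cpos: "cos \<alpha> > 0" using assms(8,9) by (intro cos_gt_zero_pi) auto
  have spos: "sin \<alpha> > 0" using assms(8,9) by (intro sin_gt_zero) auto
  have cs1: "(cos \<alpha>)^2 + (sin \<alpha>)^2 = 1" by simp
  have Vlin: "clinear V" and Vbd: "\<exists>K. \<forall>x. norm (V x) \<le> K * norm x"
    and Vinner: "\<And>x y. cinner (V x) (V y) = cinner x y"
    using assms(5) unfolding unitary_def bounded_op_def by auto
  have Vadd: "\<And>x y. V (x + y) = V x + V y" and Vsc: "\<And>a x. V (a *\<^sub>C x) = a *\<^sub>C V x"
    using Vlin unfolding clinear_def by auto
  have Ueta: "V (U \<psi>) = U \<eta>" if "U \<in> \<U>" for U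
    using assms(6,7) that unfolding local_commutant_def by auto
  have Ulin: "clinear U" if "U \<in> \<U>" for U
    using assms(2) that unfolding unitary_system_def unitary_def bounded_op_def by auto
  have psiw: "\<And>U W. U \<in> \<U> \<Longrightarrow> W \<in> \<U> \<Longrightarrow> cinner (U \<psi>) (W \<psi>) = (if U = W then 1 else 0)"
    and dense: "closure (cspan ((\<lambda>U. U \<psi>) ` \<U>)) = UNIV"
    using assms(3) unfolding wandering_def by auto
  have etaw: "\<And>U W. U \<in> \<U> \<Longrightarrow> W \<in> \<U> \<Longrightarrow> cinner (U \<eta>) (W \<eta>) = (if U = W then 1 else 0)"
    using assms(4) unfolding wandering_def by auto
  have rhow: "\<And>U W. U \<in> \<U> \<Longrightarrow> W \<in> \<U> \<Longrightarrow> cinner (U \<rho>) (W \<rho>) = (if U = W then 1 else 0)"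
    using assms(10) unfolding wandering_def \<rho>_def c_def s_def by auto
  have step1: "cinner (U \<psi>) (V (W \<psi>)) = cinner (V (U \<psi>)) (W \<psi>)" if U: "U \<in> \<U>" and W: "W \<in> \<U>" for U W
  proof -
    define d where "d = (if U = W then 1 else (0::complex))"
    have Ur: "U \<rho> = c *\<^sub>C U \<psi> + s *\<^sub>C U \<eta>" and Wr: "W \<rho> = c *\<^sub>C W \<psi> + s *\<^sub>C W \<eta>"
      using Ulin[OF U] Ulin[OF W] unfolding \<rho>_def clinear_def by auto
    have "cinner (U \<rho>) (W \<rho>) = cnj c * c * cinner (U \<psi>) (W \<psi>) + cnj c * s * cinner (U \<psi>) (W \<eta>)
        + cnj s * c * cinner (U \<eta>) (W \<psi>) + cnj s * s * cinner (U \<eta>) (W \<eta>)"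
      unfolding Ur Wr by (simp add: cinner_add_left cinner_add_right_h cinner_scaleC_left cinner_scaleC_right_h algebra_simps)
    also have "\<dots> = (cnj c * c + cnj s * s) * d + c * s * (cinner (U \<psi>) (W \<eta>) - cinner (U \<eta>) (W \<psi>))"
      using psiw[OF U W] etaw[OF U W] unfolding d_def c_def s_def by (simp add: algebra_simps)
    also have "cnj c * c + cnj s * s = 1"
    proof -
      have "cnj c * c + cnj s * s = complex_of_real ((cos \<alpha>)^2 + (sin \<alpha>)^2)"
      proof -
        have "cnj c * c + cnj s * s = complex_of_real (cos \<alpha>) * complex_of_real (cos \<alpha>)
            - (\<i> * \<i>) * (complex_of_real (sin \<alpha>) * complex_of_real (sin \<alpha>))"
          unfolding c_def s_def by (simp add: algebra_simps)
        also have "\<dots> = complex_of_real ((cos \<alpha>)^2 + (sin \<alpha>)^2)"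
          by (simp only: of_real_add of_real_mult power2_eq_square) simp
        finally show ?thesis .
      qed
      thus ?thesis using cs1 by simp
    qed
    finally have "c * s * (cinner (U \<psi>) (W \<eta>) - cinner (U \<eta>) (W \<psi>)) = 0"
      using rhow[OF U W] unfolding d_def by simp
    moreover have "c * s \<noteq> 0" unfolding c_def s_def using cpos spos by simp
    ultimately have "cinner (U \<psi>) (W \<eta>) = cinner (U \<eta>) (W \<psi>)" by simp
    thus ?thesis using Ueta[OF U] Ueta[OF W] by simp
  qed
  have Vbl: "bounded_linear V"
  proof -
    obtain K where K: "\<forall>x. norm (V x) \<le> K * norm x" using Vbd by blast
    show ?thesis
      by (rule bounded_linear_intro[where K=K]) (auto simp: Vadd Vsc scaleR_scaleC K mult.commute)
  qed
  have Vcont: "continuous_on UNIV V" using Vbl by (rule linear_continuous_on)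
  have contl: "continuous_on UNIV (\<lambda>x. cinner (f x) z)" if "continuous_on UNIV f" for f :: "'a \<Rightarrow> 'a" and z
  proof -
    have "continuous_on (range f) (\<lambda>x. cinner x z)"
      using cont_cinner_h[of z] continuous_on_subset subset_UNIV by blast
    from continuous_on_compose[OF that this] show ?thesis by (simp add: o_def)
  qed
  have contr: "continuous_on UNIV (\<lambda>x. cinner z (f x))" if "continuous_on UNIV f" for f :: "'a \<Rightarrow> 'a" and z
  proof -
    have eq: "(\<lambda>x. cinner z (f x)) = (\<lambda>x. cnj (cinner (f x) z))"
      by (rule ext, rule cinner_commute)
    show ?thesis unfolding eq by (rule continuous_on_cnj, rule contl[OF that])
  qed
  have idc: "continuous_on UNIV (\<lambda>x::'a. x)" by (rule continuous_on_id)
  let ?B = "(\<lambda>U. U \<psi>) ` \<U>"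
  have step2: "cinner x (V y) = cinner (V x) y" if x: "x \<in> ?B" for x y
  proof -
    have "{y. cinner x (V y) = cinner (V x) y} = UNIV"
    proof (rule span_all_h[OF dense])
      show "closed {y. cinner x (V y) = cinner (V x) y}"
        by (rule closed_Collect_eq) (auto intro: contr[OF Vcont] contr[OF idc])
      show "?B \<subseteq> {y. cinner x (V y) = cinner (V x) y}" using step1 x by auto
      show "0 \<in> {y. cinner x (V y) = cinner (V x) y}"
        using clinear_zero_h[OF Vlin] by (simp add: cinner_commute[of _ 0] cinner_zero_left_h)
    qed (auto simp: Vadd Vsc cinner_add_right_h cinner_scaleC_right_h)
    thus ?thesis by blast
  qed
  have step3: "cinner x (V y) = cinner (V x) y" for x y
  proof -
    have "{x. cinner x (V y) = cinner (V x) y} = UNIV"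
    proof (rule span_all_h[OF dense])
      show "closed {x. cinner x (V y) = cinner (V x) y}"
        by (rule closed_Collect_eq) (auto intro: contl[OF Vcont] contl[OF idc])
      show "?B \<subseteq> {x. cinner x (V y) = cinner (V x) y}" using step2 by auto
      show "0 \<in> {x. cinner x (V y) = cinner (V x) y}"
        using clinear_zero_h[OF Vlin] by (simp add: cinner_zero_left_h)
    qed (auto simp: Vadd Vsc cinner_add_left cinner_scaleC_left)
    thus ?thesis by blast
  qed
  show ?thesis
  proof (rule ext)
    fix x
    have "cinner (V (V x) - x) y = 0" for y
      using step3[of "V x" y] Vinner[of x y] by (simp add: cinner_diff_left_h)
    hence "V (V x) - x = 0" using cinner_eq_zero_iff by blast
    thus "(V \<circ> V) x = id x" by simp
  qed
qed

end
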